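(* Let $\lambda$ be an infinite cardinal and $k\ge 2$. A mutually algebraic subset $Y\subseteq\lambda^k$ is monadically definable if and only if $Y\setminus\Delta_k$ is finite, where $\Delta_k=\{(a,\dots,a)\in\lambda^k:a\in\lambda\}$.
   Context: $Y\subseteq\lambda^k$ is mutually algebraic if there is an integer $m$ such that for every $a\in\lambda$ the set $\{\bar a\in Y: a \text{ is a coordinate of } \bar a\}$ has size at most $m$. $Y\subseteq\lambda^k$ is monadically definable if it is definable (with parameters) in some structure $(\lambda,U_1,\dots,U_n)$ with $U_i$ unary predicates. *)

theory Defs
  imports Main
begin

datatype 'a trm = Var nat | Par 'a

datatype 'a fm =
    Eq "'a trm" "'a trm"
  | Pred nat "'a trm"
  | Neg "'a fm"
  | Conj "'a fm" "'a fm"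
  | Ex nat "'a fm"

fun tval :: "(nat \<Rightarrow> 'a) \<Rightarrow> 'a trm \<Rightarrow> 'a" where
  "tval e (Var i) = e i"
| "tval e (Par a) = a"

fun tfv :: "'a trm \<Rightarrow> nat set" where
  "tfv (Var i) = {i}"
| "tfv (Par a) = {}"

fun fv :: "'a fm \<Rightarrow> nat set" where
  "fv (Eq s t) = tfv s \<union> tfv t"
| "fv (Pred p t) = tfv t"
| "fv (Neg f) = fv f"
| "fv (Conj f g) = fv f \<union> fv g"
| "fv (Ex x f) = fv f - {x}"

fun sat :: "(nat \<Rightarrow> 'a set) \<Rightarrow> (nat \<Rightarrow> 'a) \<Rightarrow> 'a fm \<Rightarrow> bool" where
  "sat U e (Eq s t) = (tval e s = tval e t)"
| "sat U e (Pred p t) = (tval e t \<in> U p)"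
| "sat U e (Neg f) = (\<not> sat U e f)"
| "sat U e (Conj f g) = (sat U e f \<and> sat U e g)"
| "sat U e (Ex x f) = (\<exists>a. sat U (e(x := a)) f)"

text \<open>Tuples in lambda^k are lists of length k.\<close>
definition tuples :: "nat \<Rightarrow> 'a list set" where
  "tuples k = {xs. length xs = k}"

definition diag :: "nat \<Rightarrow> 'a list set" where
  "diag k = {replicate k a | a. True}"

definition mutually_algebraic :: "'a list set \<Rightarrow> bool" where
  "mutually_algebraic Y \<longleftrightarrow>
     (\<exists>m::nat. \<forall>a. finite {t \<in> Y. a \<in> set t} \<and> card {t \<in> Y. a \<in> set t} \<le> m)"

text \<open>Y is definable (with parameters) in some expansion of the universe by finitely
many unary predicates: a formula mentions only finitely many predicate symbols, so
allowing a countable family U is equivalent.\<close>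
definition monadically_definable :: "nat \<Rightarrow> 'a list set \<Rightarrow> bool" where
  "monadically_definable k Y \<longleftrightarrow>
     (\<exists>(U :: nat \<Rightarrow> 'a set) (\<phi> :: 'a fm). fv \<phi> \<subseteq> {..<k} \<and>
        Y = {xs \<in> tuples k. sat U (\<lambda>i. xs ! i) \<phi>})"

end

theory Submission
  imports Defs
begin

fun tpar :: "'a trm \<Rightarrow> 'a set" where
  "tpar (Var i) = {}"
| "tpar (Par a) = {a}"

fun params :: "'a fm \<Rightarrow> 'a set" where
  "params (Eq s t) = tpar s \<union> tpar t"
| "params (Pred p t) = tpar t"
| "params (Neg f) = params f"
| "params (Conj f g) = params f \<union> params g"
| "params (Ex x f) = params f"

fun preds :: "'a fm \<Rightarrow> nat set" where
  "preds (Eq s t) = {}"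
| "preds (Pred p t) = {p}"
| "preds (Neg f) = preds f"
| "preds (Conj f g) = preds f \<union> preds g"
| "preds (Ex x f) = preds f"

lemma finite_tpar: "finite (tpar t)" by (cases t) auto
lemma finite_params: "finite (params f)" by (induction f) (auto simp: finite_tpar)
lemma finite_preds: "finite (preds f)" by (induction f) auto

lemma tval_fv: "\<forall>i\<in>tfv t. e i = e' i \<Longrightarrow> tval e t = tval e' t"
  by (cases t) auto

lemma sat_fv: "\<forall>i\<in>fv f. e i = e' i \<Longrightarrow> sat U e f = sat U e' f"
proof (induction f arbitrary: e e')
  case (Eq s t) then show ?case using tval_fv[of s e e'] tval_fv[of t e e'] by auto
next
  case (Pred p t) then show ?case using tval_fv[of t e e'] by auto
next
  case (Ex x f)
  have "\<And>a. sat U (e(x:=a)) f = sat U (e'(x:=a)) f"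
    using Ex.prems by (intro Ex.IH) auto
  then show ?case by simp
next
  case (Conj f g)
  have "sat U e f = sat U e' f" using Conj.prems by (intro Conj.IH(1)) auto
  moreover have "sat U e g = sat U e' g" using Conj.prems by (intro Conj.IH(2)) auto
  ultimately show ?case by simp
qed auto

definition sw :: "'a \<Rightarrow> 'a \<Rightarrow> 'a \<Rightarrow> 'a" where
  "sw a b x = (if x = a then b else if x = b then a else x)"

lemma sw_sw[simp]: "sw a b (sw a b x) = x" by (auto simp: sw_def)
lemma sw_inj: "(sw a b x = sw a b y) = (x = y)" by (metis sw_sw)

lemma tval_sw: "a \<notin> tpar t \<Longrightarrow> b \<notin> tpar t \<Longrightarrow> tval (sw a b \<circ> e) t = sw a b (tval e t)"
  by (cases t) (auto simp: sw_def)

lemma sat_sw: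
  assumes "a \<notin> params f" "b \<notin> params f" "\<forall>p\<in>preds f. (a \<in> U p) = (b \<in> U p)"
  shows "sat U (sw a b \<circ> e) f = sat U e f"
  using assms
proof (induction f arbitrary: e)
  case (Eq s t)
  have "tval (sw a b \<circ> e) s = sw a b (tval e s)" "tval (sw a b \<circ> e) t = sw a b (tval e t)"
    using Eq.prems by (auto intro: tval_sw)
  then show ?case by (metis sat.simps(1) sw_inj)
next
  case (Pred p t)
  have "tval (sw a b \<circ> e) t = sw a b (tval e t)" using Pred.prems by (auto intro: tval_sw)
  moreover have "(sw a b x \<in> U p) = (x \<in> U p)" for x using Pred.prems by (auto simp: sw_def)
  ultimately show ?case by (metis sat.simps(2))
next
  case (Ex x f)
  have eq: "\<And>c. (sw a b \<circ> e)(x := c) = sw a b \<circ> (e(x := sw a b c))"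
    by (auto simp: fun_eq_iff)
  have "(\<exists>c. sat U ((sw a b \<circ> e)(x := c)) f) = (\<exists>c. sat U (e(x := sw a b c)) f)"
  proof -
    have "\<And>e'. sat U (sw a b \<circ> e') f = sat U e' f" using Ex.prems by (intro Ex.IH) auto
    then show ?thesis unfolding eq by blast
  qed
  also have "\<dots> = (\<exists>d. sat U (e(x := d)) f)" by (metis sw_sw)
  finally show ?case by (simp only: sat.simps)
qed auto

definition disj :: "'a fm \<Rightarrow> 'a fm \<Rightarrow> 'a fm" where
  "disj f g = Neg (Conj (Neg f) (Neg g))"

fun conjs :: "'a fm list \<Rightarrow> 'a fm" where
  "conjs [] = Eq (Var 0) (Var 0)"
| "conjs (f # fs) = Conj f (conjs fs)"

fun disjs :: "'a fm list \<Rightarrow> 'a fm" where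
  "disjs [] = Neg (Eq (Var 0) (Var 0))"
| "disjs (f # fs) = disj f (disjs fs)"

lemma sat_conjs: "sat U e (conjs fs) = (\<forall>f\<in>set fs. sat U e f)" by (induction fs) auto
lemma sat_disjs: "sat U e (disjs fs) = (\<exists>f\<in>set fs. sat U e f)" by (induction fs) (auto simp: disj_def)
lemma fv_conjs: "fv (conjs fs) = {0} \<union> \<Union>(fv ` set fs)" by (induction fs) auto
lemma fv_disjs: "fv (disjs fs) = {0} \<union> \<Union>(fv ` set fs)" by (induction fs) (auto simp: disj_def)

theorem lemma4p3:
  fixes Y :: "'a list set" and k :: nat
  assumes "infinite (UNIV :: 'a set)"
    and "k \<ge> 2"
    and "Y \<subseteq> tuples k"
    and "mutually_algebraic Y"
  shows "monadically_definable k Y \<longleftrightarrow> finite (Y - diag k)"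
proof
  assume "monadically_definable k Y"
  then obtain U and \<phi> :: "'a fm" where fvk: "fv \<phi> \<subseteq> {..<k}"
    and Ydef: "Y = {xs \<in> tuples k. sat U (\<lambda>i. xs ! i) \<phi>}"
    unfolding monadically_definable_def by blast
  obtain m where MA: "\<And>a. finite {t \<in> Y. a \<in> set t}"
    using assms(4) unfolding mutually_algebraic_def by blast
  define sig where "sig x = {p \<in> preds \<phi>. x \<in> U p}" for x
  define F where "F = params \<phi> \<union> {x. finite {y. sig y = sig x}}"
  have "{x. finite {y. sig y = sig x}} \<subseteq> \<Union>{sig -` {s} | s. s \<in> Pow (preds \<phi>) \<and> finite (sig -` {s})}"
  proof
    fix x assume "x \<in> {x. finite {y. sig y = sig x}}"
    have "sig -` {sig x} \<in> {sig -` {s} | s. s \<in> Pow (preds \<phi>) \<and> finite (sig -` {s})}"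
        using \<open>x \<in> {x. finite {y. sig y = sig x}}\<close> unfolding vimage_def
        by (auto simp: sig_def)
    then show "x \<in> \<Union>{sig -` {s} | s. s \<in> Pow (preds \<phi>) \<and> finite (sig -` {s})}"
      by blast
  qed
  moreover have "finite (\<Union>{sig -` {s} | s. s \<in> Pow (preds \<phi>) \<and> finite (sig -` {s})})"
  proof (rule finite_Union)
    have "{sig -` {s} | s. s \<in> Pow (preds \<phi>) \<and> finite (sig -` {s})} \<subseteq> (\<lambda>s. sig -` {s}) ` Pow (preds \<phi>)"
      by auto
    then show "finite {sig -` {s} | s. s \<in> Pow (preds \<phi>) \<and> finite (sig -` {s})}"
      using finite_preds by (meson finite_Pow_iff finite_imageI finite_subset)
  qed auto
  ultimately have finF: "finite F" unfolding F_def using finite_params finite_subset by blast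
  have finT: "finite {xs. set xs \<subseteq> F \<and> length xs = k}"
    using finite_lists_length_eq[OF finF] .
  show "finite (Y - diag k)"
  proof (rule ccontr)
    assume inf: "infinite (Y - diag k)"
    then have "infinite (Y - diag k - {xs. set xs \<subseteq> F \<and> length xs = k})"
      using finT by (metis Diff_infinite_finite)
    then obtain t0 where "t0 \<in> Y - diag k - {xs. set xs \<subseteq> F \<and> length xs = k}"
      by (metis ex_in_conv finite.emptyI)
    then obtain t where t: "t \<in> Y" "t \<notin> diag k" "\<not> set t \<subseteq> F"
      using assms(3) unfolding tuples_def by blast
    have lt: "length t = k" using t(1) assms(3) unfolding tuples_def by auto
    obtain a where a: "a \<in> set t" "a \<notin> F" using t(3) by auto
    obtain b where b: "b \<in> set t" "b \<noteq> a"
    proof (rule ccontr)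
      assume "\<not> thesis"
      then have "\<forall>y\<in>set t. y = a" using that by blast
      then have "t = replicate k a" using lt by (simp add: replicate_eqI)
      then show False using t(2) unfolding diag_def by auto
    qed
    define S where "S = {y. sig y = sig a} - params \<phi> - set t"
    have "infinite S" unfolding S_def using a(2) unfolding F_def
      using finite_params by (metis (no_types, lifting) Diff_infinite_finite List.finite_set mem_Collect_eq UnCI)
    moreover have "S \<subseteq> \<Union>(set ` {u \<in> Y. b \<in> set u})"
    proof
      fix a' assume a': "a' \<in> S"
      define u where "u = map (sw a a') t"
      have anp: "a \<notin> params \<phi>" using a(2) unfolding F_def by auto
      have a'np: "a' \<notin> params \<phi>" "a' \<notin> set t" using a' unfolding S_def by auto
      have sg: "sig a' = sig a" using a' unfolding S_def by auto
      have pr: "\<forall>p\<in>preds \<phi>. (a \<in> U p) = (a' \<in> U p)"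
      proof
        fix p assume p: "p \<in> preds \<phi>"
        have "p \<in> sig a \<longleftrightarrow> p \<in> sig a'" using sg by simp
        then show "(a \<in> U p) = (a' \<in> U p)" using p unfolding sig_def by auto
      qed
      have "sat U (\<lambda>i. u ! i) \<phi> = sat U (sw a a' \<circ> (\<lambda>i. t ! i)) \<phi>"
        using fvk lt by (intro sat_fv) (auto simp: u_def)
      also have "\<dots> = sat U (\<lambda>i. t ! i) \<phi>" using sat_sw[OF anp a'np(1) pr] .
      finally have "u \<in> Y" using t(1) lt unfolding Ydef tuples_def u_def by auto
      moreover have "b \<in> set u" using b a'np(2) unfolding u_def
        by (auto simp: sw_def intro!: image_eqI[where x=b])
      moreover have "a' \<in> set u" using a(1) unfolding u_def
        by (auto simp: sw_def intro!: image_eqI[where x=a])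
      ultimately show "a' \<in> \<Union>(set ` {u \<in> Y. b \<in> set u})" by blast
    qed
    moreover have "finite (\<Union>(set ` {u \<in> Y. b \<in> set u}))" using MA by auto
    ultimately show False using finite_subset by blast
  qed
next
  assume fin: "finite (Y - diag k)"
  obtain L where L: "set L = Y - diag k" using finite_list[OF fin] by blast
  define U :: "nat \<Rightarrow> 'a set" where "U = (\<lambda>_. {a. replicate k a \<in> Y})"
  define tf :: "'a list \<Rightarrow> 'a fm" where "tf t = conjs (map (\<lambda>i. Eq (Var i) (Par (t ! i))) [0..<k])" for t
  define df :: "'a fm" where "df = Conj (conjs (map (\<lambda>i. Eq (Var 0) (Var i)) [0..<k])) (Pred 0 (Var 0))"
  define \<phi> where "\<phi> = disj df (disjs (map tf L))"
  have k0: "0 < k" using assms(2) by simp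
  have "fv \<phi> \<subseteq> {..<k}"
    unfolding \<phi>_def disj_def df_def tf_def using k0 by (auto simp: fv_conjs fv_disjs)
  moreover have "Y = {xs \<in> tuples k. sat U (\<lambda>i. xs ! i) \<phi>}"
  proof (intro set_eqI iffI)
    fix xs assume xs: "xs \<in> Y"
    have lx: "length xs = k" using xs assms(3) unfolding tuples_def by auto
    show "xs \<in> {xs \<in> tuples k. sat U (\<lambda>i. xs ! i) \<phi>}"
    proof (cases "xs \<in> diag k")
      case True
      then obtain c where c: "xs = replicate k c" unfolding diag_def by auto
      then have "sat U (\<lambda>i. xs ! i) df" using xs k0
        by (auto simp: df_def sat_conjs U_def)
      then show ?thesis using lx by (simp add: \<phi>_def disj_def tuples_def)
    next
      case False
      then have "xs \<in> set L" using L xs by auto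
      moreover have "sat U (\<lambda>i. xs ! i) (tf xs)" by (simp add: tf_def sat_conjs)
      ultimately show ?thesis using lx by (auto simp: \<phi>_def disj_def tuples_def sat_disjs)
    qed
  next
    fix xs assume xs: "xs \<in> {xs \<in> tuples k. sat U (\<lambda>i. xs ! i) \<phi>}"
    then have lx: "length xs = k" and s: "sat U (\<lambda>i. xs ! i) \<phi>" unfolding tuples_def by auto
    show "xs \<in> Y"
    proof (cases "sat U (\<lambda>i. xs ! i) df")
      case True
      then have eq: "\<forall>i<k. xs ! 0 = xs ! i" and r: "replicate k (xs ! 0) \<in> Y"
        by (auto simp: df_def sat_conjs U_def)
      have "xs = replicate k (xs ! 0)" using eq lx by (intro nth_equalityI) auto
      then show ?thesis using r by simp
    next
      case False
      then obtain t where t: "t \<in> set L" "sat U (\<lambda>i. xs ! i) (tf t)"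
        using s by (auto simp: \<phi>_def disj_def sat_disjs)
      have lt: "length t = k" using t(1) L assms(3) unfolding tuples_def by auto
      have "\<forall>i<k. xs ! i = t ! i" using t(2) by (auto simp: tf_def sat_conjs)
      then have "xs = t" using lx lt by (intro nth_equalityI) auto
      then show ?thesis using t(1) L by auto
    qed
  qed
  ultimately show "monadically_definable k Y" unfolding monadically_definable_def by blast
qed

end
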